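(* Let $\phi$ be a formula whose free variables are among $\{x\}$. If $[x:=a](\phi\to\mathsf{K}_x[x:=a]\phi)$ is a theorem of $\mathbf{LEL}$ for every $a\in\mathbf{A}$, then for every sentence $\alpha$, $\mathsf{K}_\phi\alpha\to\mathsf{K}_\phi\mathsf{K}_\phi\alpha$ is a theorem of $\mathbf{LEL}$.
   Context: Fix a nonempty finite set $\mathbf{A}$ of agents, a countable set $\mathbf{X}$ of variables disjoint from $\mathbf{A}$, and a countable set $\mathbf{P}$ of predicate letters. Formulas and free variables: $\phi ::= p_x \mid \top \mid \neg\phi \mid (\phi\wedge\phi) \mid [x:=a]\phi \mid \mathsf{K}_X\alpha$ ($p\in\mathbf{P}$, $x\in\mathbf{X}$, $a\in\mathbf{A}$, $X\subseteq\mathbf{X}$ finite possibly empty, $\alpha$ with no free variables), $FV(p_x)=\{x\}$, $FV(\top)=\emptyset$, $FV(\neg\phi)=FV(\phi)$, $FV(\phi\wedge\psi)=FV(\phi)\cup FV(\psi)$, $FV([x:=a]\phi)=FV(\phi)\setminus\{x\}$, $FV(\mathsf{K}_X\alpha)=X$. Sentences have no free variables. $\bot:=\neg\top$, $\langle x:=a\rangle\phi:=\neg[x:=a]\neg\phi$. $\phi[y/x]$ replaces free occurrences of $x$ by $y$ (including in index sets of $\mathsf{K}_X$); admissible if $x$ has no free occurrence within the scope of any $[y:=b]$. $[\vec{x}:=\vec{a}]\phi$ abbreviates $[x_1:=a_1]\cdots[x_n:=a_n]\phi$ for equal-length strings $\vec x,\vec a$, $\mathsf{K}_{\vec x}:=\mathsf{K}_{\{x_1,\dots,x_n\}}$,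 $\mathsf{K}_x:=\mathsf{K}_{\{x\}}$, $\{\vec a\}=\{a_1,\dots,a_n\}$. $\mathbf{LEL}$: axioms — propositional tautologies; $\mathsf{K}_X(\alpha\to\beta)\to(\mathsf{K}_X\alpha\to\mathsf{K}_X\beta)$; $\mathsf{K}_X\alpha\to\mathsf{K}_Y\alpha$ ($X\subseteq Y$); $[x:=a](\phi\to\psi)\to([x:=a]\phi\to[x:=a]\psi)$; $\langle x:=a\rangle\phi\to[x:=a]\phi$; $\phi\to[x:=a]\phi$ ($x\notin FV(\phi)$); $[y:=a]([x:=a]\phi\to\phi[y/x])$ ($\phi[y/x]$ admissible); $[x:=a][y:=b]\phi\to[y:=b][x:=a]\phi$ ($x\neq y$); $\bigwedge_{a\in\mathbf{A}}[x:=a]\phi\to\phi$; $\mathsf{K}_X\alpha\to\alpha$; $[\vec{x}:=\vec{a}](\neg\mathsf{K}_{\vec{x}}\alpha\to\mathsf{K}_{\vec{x}}[\vec{x}:=\vec{a}]\neg\mathsf{K}_{\vec{x}}\alpha)$; $[x:=a]\mathsf{K}_{x}\langle x:=a\rangle\top$; $[x:=a](p_x\to\mathsf{K}_{x}[x:=a]p_x)$; $[\vec{x}:=\vec{a}](\bigwedge_{b\in B}[x:=b]\bot\to\mathsf{K}_{\vec{x}}\bigwedge_{b\in B}[x:=b]\bot)$ with $B=\mathbf{A}\setminus\{\vec a\}$. Rules: modus ponens; from sentence $\alpha$ infer $\mathsf{K}_\emptyset\alpha$; from $\phi$ infer $[x:=a]\phi$. Intensional distributed knowledge: for a formula $\phi$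 with free variables among $\{x\}$ and $A\subseteq\mathbf{A}$, let $\phi!(A):=\bigwedge_{a\in A}\langle x:=a\rangle\phi\wedge\bigwedge_{b\in\mathbf{A}\setminus A}[x:=b]\neg\phi$. For a sentence $\alpha$, $\mathsf{K}_\phi\alpha:=\bigwedge_{\{\vec a\}\subseteq\mathbf{A}}(\phi!(\{\vec a\})\to[\vec{x}:=\vec{a}]\mathsf{K}_{\vec{x}}\alpha)$, where the conjunction ranges over all subsets of $\mathbf{A}$, each listed as a string $\vec a$ of distinct agents and paired with a string $\vec x$ of distinct variables of the same length. *)

theory Defs
  imports Main "HOL-Library.Countable"
begin

(* Formulas of LEL.  'p: predicate letters, 'x: variables, 'a: agents. *)
datatype ('p, 'x, 'a) fm =
    Pred 'p 'x
  | Top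
  | Neg "('p, 'x, 'a) fm"
  | And "('p, 'x, 'a) fm" "('p, 'x, 'a) fm"
  | Assign 'x 'a "('p, 'x, 'a) fm"
  | K "'x set" "('p, 'x, 'a) fm"

fun FV :: "('p, 'x, 'a) fm \<Rightarrow> 'x set" where
  "FV (Pred p x) = {x}"
| "FV Top = {}"
| "FV (Neg f) = FV f"
| "FV (And f g) = FV f \<union> FV g"
| "FV (Assign x a f) = FV f - {x}"
| "FV (K X f) = X"

fun wf :: "('p, 'x, 'a) fm \<Rightarrow> bool" where
  "wf (Pred p x) = True"
| "wf Top = True"
| "wf (Neg f) = wf f"
| "wf (And f g) = (wf f \<and> wf g)"
| "wf (Assign x a f) = wf f"
| "wf (K X f) = (finite X \<and> wf f \<and> FV f = {})"

definition Bot :: "('p, 'x, 'a) fm" where "Bot = Neg Top"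
definition Imp :: "('p, 'x, 'a) fm \<Rightarrow> ('p, 'x, 'a) fm \<Rightarrow> ('p, 'x, 'a) fm"
  where "Imp f g = Neg (And f (Neg g))"
definition Dia :: "'x \<Rightarrow> 'a \<Rightarrow> ('p, 'x, 'a) fm \<Rightarrow> ('p, 'x, 'a) fm"
  where "Dia x a f = Neg (Assign x a (Neg f))"

fun Conj :: "('p, 'x, 'a) fm list \<Rightarrow> ('p, 'x, 'a) fm" where
  "Conj [] = Top"
| "Conj (f # fs) = And f (Conj fs)"

(* [x1:=a1]...[xn:=an] phi ; used only for lists of equal length *)
fun Assigns :: "'x list \<Rightarrow> 'a list \<Rightarrow> ('p, 'x, 'a) fm \<Rightarrow> ('p, 'x, 'a) fm" where
  "Assigns (x # xs) (a # as) f = Assign x a (Assigns xs as f)"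
| "Assigns _ _ f = f"

fun subst :: "'x \<Rightarrow> 'x \<Rightarrow> ('p, 'x, 'a) fm \<Rightarrow> ('p, 'x, 'a) fm" where
  "subst y x (Pred p z) = Pred p (if z = x then y else z)"
| "subst y x Top = Top"
| "subst y x (Neg f) = Neg (subst y x f)"
| "subst y x (And f g) = And (subst y x f) (subst y x g)"
| "subst y x (Assign z a f) = (if z = x then Assign z a f else Assign z a (subst y x f))"
| "subst y x (K X f) = K (if x \<in> X then insert y (X - {x}) else X) f"

fun admissible :: "'x \<Rightarrow> 'x \<Rightarrow> ('p, 'x, 'a) fm \<Rightarrow> bool" where
  "admissible y x (Pred p z) = True"
| "admissible y x Top = True"
| "admissible y x (Neg f) = admissible y x f"
| "admissible y x (And f g) = (admissible y x f \<and> admissible y x g)"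
| "admissible y x (Assign z a f) =
     (if z = x then True else if z = y then x \<notin> FV f else admissible y x f)"
| "admissible y x (K X f) = True"

(* propositional tautologies: true under every valuation of the non-boolean subformulas *)
fun peval :: "(('p, 'x, 'a) fm \<Rightarrow> bool) \<Rightarrow> ('p, 'x, 'a) fm \<Rightarrow> bool" where
  "peval v Top = True"
| "peval v (Neg f) = (\<not> peval v f)"
| "peval v (And f g) = (peval v f \<and> peval v g)"
| "peval v f = v f"

definition tautology :: "('p, 'x, 'a) fm \<Rightarrow> bool" where
  "tautology f \<longleftrightarrow> (\<forall>v. peval v f)"

(* Axiom schemes of LEL.  Big conjunctions over (sub)sets of agents are given by an
   arbitrary enumerating list (all such are propositionally equivalent). *)
inductive axiom :: "('p, 'x, 'a::finite) fm \<Rightarrow> bool" where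
  ax_taut: "tautology f \<Longrightarrow> axiom f"
| ax_KK: "axiom (Imp (K X (Imp a b)) (Imp (K X a) (K X b)))"
| ax_mono: "X \<subseteq> Y \<Longrightarrow> axiom (Imp (K X a) (K Y a))"
| ax_AK: "axiom (Imp (Assign x c (Imp f g)) (Imp (Assign x c f) (Assign x c g)))"
| ax_func: "axiom (Imp (Dia x c f) (Assign x c f))"
| ax_vac: "x \<notin> FV f \<Longrightarrow> axiom (Imp f (Assign x c f))"
| ax_subst: "admissible y x f \<Longrightarrow> axiom (Assign y c (Imp (Assign x c f) (subst y x f)))"
| ax_comm: "x \<noteq> y \<Longrightarrow> axiom (Imp (Assign x c (Assign y d f)) (Assign y d (Assign x c f)))"
| ax_all: "set as = UNIV \<Longrightarrow> axiom (Imp (Conj (map (\<lambda>c. Assign x c f) as)) f)"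
| ax_T: "axiom (Imp (K X a) a)"
| ax_5: "length xs = length as \<Longrightarrow>
     axiom (Assigns xs as (Imp (Neg (K (set xs) a))
                               (K (set xs) (Assigns xs as (Neg (K (set xs) a))))))"
| ax_exist: "axiom (Assign x c (K {x} (Dia x c Top)))"
| ax_pred: "axiom (Assign x c (Imp (Pred p x) (K {x} (Assign x c (Pred p x)))))"
| ax_none: "length xs = length as \<Longrightarrow> set bs = UNIV - set as \<Longrightarrow>
     axiom (Assigns xs as (Imp (Conj (map (\<lambda>b. Assign x b Bot) bs))
                               (K (set xs) (Conj (map (\<lambda>b. Assign x b Bot) bs)))))"

inductive LEL :: "('p, 'x, 'a::finite) fm \<Rightarrow> bool" where
  lel_ax: "axiom f \<Longrightarrow> wf f \<Longrightarrow> LEL f"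
| lel_mp: "LEL f \<Longrightarrow> LEL (Imp f g) \<Longrightarrow> LEL g"
| lel_nec: "LEL a \<Longrightarrow> FV a = {} \<Longrightarrow> LEL (K {} a)"
| lel_asg: "LEL f \<Longrightarrow> LEL (Assign x c f)"

(* A choice of how the big conjunction defining K_phi is written out:
   Bs lists all subsets of agents, enum B lists B as a string of distinct agents,
   vars B is a string of distinct variables of the same length. *)
definition valid_choice :: "'a::finite set list \<Rightarrow> ('a set \<Rightarrow> 'a list) \<Rightarrow> ('a set \<Rightarrow> 'x list) \<Rightarrow> bool" where
  "valid_choice Bs enum vars \<longleftrightarrow>
     distinct Bs \<and> set Bs = Pow UNIV \<and>
     (\<forall>B. distinct (enum B) \<and> set (enum B) = B \<and>
          distinct (vars B) \<and> length (vars B) = length (enum B))"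

definition bang :: "('a::finite set \<Rightarrow> 'a list) \<Rightarrow> 'x \<Rightarrow> ('p, 'x, 'a) fm \<Rightarrow> 'a set \<Rightarrow> ('p, 'x, 'a) fm" where
  "bang enum x f B =
     And (Conj (map (\<lambda>c. Dia x c f) (enum B)))
         (Conj (map (\<lambda>b. Assign x b (Neg f)) (enum (UNIV - B))))"

definition Kphi :: "'a::finite set list \<Rightarrow> ('a set \<Rightarrow> 'a list) \<Rightarrow> ('a set \<Rightarrow> 'x list) \<Rightarrow>
    'x \<Rightarrow> ('p, 'x, 'a) fm \<Rightarrow> ('p, 'x, 'a) fm \<Rightarrow> ('p, 'x, 'a) fm" where
  "Kphi Bs enum vars x f a =
     Conj (map (\<lambda>B. Imp (bang enum x f B)
                         (Assigns (vars B) (enum B) (K (set (vars B)) a))) Bs)"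

end

theory Submission
  imports Defs
begin

lemma LEL_wf: "LEL f \<Longrightarrow> wf f"
  by (induction rule: LEL.induct) (auto simp: Imp_def)

lemma peval_Conj[simp]: "peval v (Conj gs) = (\<forall>g\<in>set gs. peval v g)"
  by (induction gs) auto

lemma peval_Imp[simp]: "peval v (Imp a b) = (peval v a \<longrightarrow> peval v b)"
  by (simp add: Imp_def)
lemma peval_Dia[simp]: "peval v (Dia x c f) = (\<not> v (Assign x c (Neg f)))"
  by (simp add: Dia_def)
lemma peval_Bot[simp]: "peval v Bot = False" by (simp add: Bot_def)
lemma wf_Imp[simp]: "wf (Imp a b) = (wf a \<and> wf b)" by (simp add: Imp_def)
lemma FV_Imp[simp]: "FV (Imp a b) = FV a \<union> FV b" by (simp add: Imp_def)
lemma wf_Dia[simp]: "wf (Dia x c f) = wf f" by (simp add: Dia_def)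
lemma FV_Dia[simp]: "FV (Dia x c f) = FV f - {x}" by (simp add: Dia_def)
lemma wf_Bot[simp]: "wf Bot" by (simp add: Bot_def)
lemma FV_Bot[simp]: "FV Bot = {}" by (simp add: Bot_def)
lemma wf_Conj[simp]: "wf (Conj gs) = (\<forall>g\<in>set gs. wf g)" by (induction gs) auto
lemma FV_Conj[simp]: "FV (Conj gs) = (\<Union>g\<in>set gs. FV g)" by (induction gs) auto

lemma prop0: assumes "wf b" "\<And>v. peval v b" shows "LEL b"
  using assms by (auto intro!: lel_ax ax_taut simp: tautology_def)

lemma prop1: assumes "LEL a" "wf b" "\<And>v. peval v a \<Longrightarrow> peval v b" shows "LEL b"
proof -
  have "LEL (Imp a b)" using assms LEL_wf[OF assms(1)] by (intro prop0) auto
  with assms(1) show ?thesis by (rule lel_mp)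
qed

lemma prop2: assumes "LEL a" "LEL b" "wf c" "\<And>v. peval v a \<Longrightarrow> peval v b \<Longrightarrow> peval v c" shows "LEL c"
proof -
  have "LEL (Imp a (Imp b c))" using assms LEL_wf[OF assms(1)] LEL_wf[OF assms(2)] by (intro prop0) auto
  with assms(1,2) show ?thesis by (meson lel_mp)
qed

lemma prop3: assumes "LEL a" "LEL b" "LEL d" "wf c"
  "\<And>v. peval v a \<Longrightarrow> peval v b \<Longrightarrow> peval v d \<Longrightarrow> peval v c" shows "LEL c"
proof -
  have "LEL (Imp a (Imp b (Imp d c)))" using assms LEL_wf[OF assms(1)] LEL_wf[OF assms(2)] LEL_wf[OF assms(3)]
    by (intro prop0) auto
  with assms(1,2,3) show ?thesis by (meson lel_mp)
qed

lemma imp_trans: "LEL (Imp a b) \<Longrightarrow> LEL (Imp b c) \<Longrightarrow> LEL (Imp a c)"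
  by (rule prop2, assumption+, use LEL_wf in force, auto)

lemma asg_mono: assumes "LEL (Imp f g)" shows "LEL (Imp (Assign x c f) (Assign x c g))"
proof -
  have "LEL (Imp (Assign x c (Imp f g)) (Imp (Assign x c f) (Assign x c g)))"
    using LEL_wf[OF assms] by (intro lel_ax ax_AK) auto
  then show ?thesis by (rule lel_mp[OF lel_asg[OF assms]])
qed

lemma asg_mono2: assumes "LEL (Imp f (Imp g h))"
  shows "LEL (Imp (Assign x c f) (Imp (Assign x c g) (Assign x c h)))"
proof -
  have 1: "LEL (Imp (Assign x c f) (Assign x c (Imp g h)))" by (rule asg_mono[OF assms])
  have 2: "LEL (Imp (Assign x c (Imp g h)) (Imp (Assign x c g) (Assign x c h)))"
    using LEL_wf[OF assms] by (intro lel_ax ax_AK) auto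
  show ?thesis by (rule imp_trans[OF 1 2])
qed

fun AS :: "('x \<times> 'a) list \<Rightarrow> ('p, 'x, 'a) fm \<Rightarrow> ('p, 'x, 'a) fm" where
  "AS [] f = f"
| "AS ((x,a)#ps) f = Assign x a (AS ps f)"

lemma AS_append[simp]: "AS (ps @ qs) f = AS ps (AS qs f)"
  by (induction ps) auto

lemma Assigns_AS: "Assigns xs as f = AS (zip xs as) f"
  by (induction xs as f rule: Assigns.induct) auto

lemma wf_AS[simp]: "wf (AS ps f) = wf f" by (induction ps) auto
lemma FV_AS[simp]: "FV (AS ps f) = FV f - set (map fst ps)" by (induction ps) auto

lemma AS_nec: "LEL f \<Longrightarrow> LEL (AS ps f)"
  by (induction ps) (auto intro: lel_asg)

lemma AS_mono: "LEL (Imp f g) \<Longrightarrow> LEL (Imp (AS ps f) (AS ps g))"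
  by (induction ps) (auto intro: asg_mono)

lemma AS_mono2: "LEL (Imp f (Imp g h)) \<Longrightarrow> LEL (Imp (AS ps f) (Imp (AS ps g) (AS ps h)))"
  by (induction ps) (auto intro: asg_mono2)

lemma K_mono: assumes "LEL (Imp a b)" "FV a = {}" "FV b = {}" "finite X"
  shows "LEL (Imp (K X a) (K X b))"
proof -
  have w: "wf a" "wf b" using LEL_wf[OF assms(1)] by auto
  have 1: "LEL (K {} (Imp a b))" using assms by (intro lel_nec) auto
  have 2: "LEL (Imp (K {} (Imp a b)) (K X (Imp a b)))" using assms w by (intro lel_ax ax_mono) auto
  have 3: "LEL (Imp (K X (Imp a b)) (Imp (K X a) (K X b)))" using assms w by (intro lel_ax ax_KK) auto
  show ?thesis by (rule lel_mp[OF lel_mp[OF 1 2] 3])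
qed

lemma K_mono2: assumes "LEL (Imp a (Imp b c))" "FV a = {}" "FV b = {}" "FV c = {}" "finite X"
  shows "LEL (Imp (K X a) (Imp (K X b) (K X c)))"
proof -
  have w: "wf a" "wf b" "wf c" using LEL_wf[OF assms(1)] by auto
  have 1: "LEL (Imp (K X a) (K X (Imp b c)))" using assms by (intro K_mono) auto
  have 3: "LEL (Imp (K X (Imp b c)) (Imp (K X b) (K X c)))" using assms w by (intro lel_ax ax_KK) auto
  show ?thesis by (rule imp_trans[OF 1 3])
qed

lemma Kidx_mono: "X \<subseteq> Y \<Longrightarrow> finite Y \<Longrightarrow> wf a \<Longrightarrow> FV a = {} \<Longrightarrow> LEL (Imp (K X a) (K Y a))"
  by (intro lel_ax ax_mono) (auto dest: finite_subset)

lemma vac: "x \<notin> FV s \<Longrightarrow> wf s \<Longrightarrow> LEL (Imp s (Assign x c s))"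
  by (intro lel_ax ax_vac) auto

lemma AS_vac: "FV s \<inter> set (map fst ps) = {} \<Longrightarrow> wf s \<Longrightarrow> LEL (Imp s (AS ps s))"
proof (induction ps)
  case Nil then show ?case by (intro prop0) auto
next
  case (Cons p ps)
  obtain z d where p: "p = (z,d)" by force
  have 1: "LEL (Imp s (Assign z d s))" using Cons p by (intro vac) auto
  have 2: "LEL (Imp (Assign z d s) (Assign z d (AS ps s)))" using Cons by (intro asg_mono) auto
  show ?case using imp_trans[OF 1 2] p by simp
qed

lemma conj_intro: "(\<And>g. g \<in> set gs \<Longrightarrow> LEL (Imp h g)) \<Longrightarrow> wf h \<Longrightarrow> LEL (Imp h (Conj gs))"
proof (induction gs)
  case Nil then show ?case by (intro prop0) auto
next
  case (Cons g gs)
  have 1: "LEL (Imp h g)" "LEL (Imp h (Conj gs))" using Cons by auto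
  show ?case by (rule prop2[OF 1]) (use LEL_wf[OF 1(1)] LEL_wf[OF 1(2)] in auto)
qed


lemma subst_AS: "x \<notin> set (map fst ps) \<Longrightarrow>
   subst z x (AS ps (K Y a)) = AS ps (K (if x \<in> Y then insert z (Y - {x}) else Y) a)"
  by (induction ps) auto

lemma adm_AS: "z \<notin> set (map fst ps) \<Longrightarrow> admissible z x (AS ps (K Y a))"
  by (induction ps) auto

lemma rename:
  "length ps = length qs \<Longrightarrow> map snd ps = map snd qs \<Longrightarrow> distinct (map fst ps) \<Longrightarrow>
   distinct (map fst qs) \<Longrightarrow> set (map fst ps) \<inter> set (map fst qs) = {} \<Longrightarrow>
   S \<inter> (set (map fst ps) \<union> set (map fst qs)) = {} \<Longrightarrow> finite S \<Longrightarrow> wf a \<Longrightarrow> FV a = {} \<Longrightarrow>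
   LEL (Imp (AS ps (K (S \<union> set (map fst ps)) a)) (AS qs (K (S \<union> set (map fst qs)) a)))"
proof (induction ps qs arbitrary: S rule: list_induct2)
  case Nil then show ?case by (intro prop0) auto
next
  case (Cons p ps q qs)
  obtain x c where p: "p = (x,c)" by force
  obtain z where q: "q = (z,c)" using Cons(3) p by (cases q) auto
  define F where "F = set (map fst ps)"
  define G where "G = set (map fst qs)"
  define \<psi> where "\<psi> = AS ps (K (S \<union> insert x F) a)"
  have xF: "x \<notin> F" "x \<notin> S" "x \<notin> G" "x \<noteq> z" using Cons.prems p q by (auto simp: F_def G_def)
  have zF: "z \<notin> F" "z \<notin> S" "z \<notin> G" using Cons.prems p q by (auto simp: F_def G_def)
  have finF: "finite F" "finite G" by (auto simp: F_def G_def)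
  have s: "subst z x \<psi> = AS ps (K (insert z S \<union> F) a)"
    unfolding \<psi>_def using xF by (subst subst_AS) (auto simp: F_def intro!: arg_cong[where f="\<lambda>Y. AS ps (K Y a)"])
  have ws: "wf (subst z x \<psi>)" unfolding s using Cons.prems by (simp add: F_def)
  have 1: "LEL (Assign z c (Imp (Assign x c \<psi>) (subst z x \<psi>)))"
    using Cons.prems xF zF finF ws
    by (intro lel_ax ax_subst) (auto simp: F_def \<psi>_def intro!: adm_AS)
  note 1 = 1[unfolded s]
  have 2: "LEL (Imp (Assign x c \<psi>) (Assign z c (Assign x c \<psi>)))"
    using Cons.prems xF zF finF unfolding \<psi>_def by (intro vac) (auto simp: F_def)
  have 3: "LEL (Imp (Assign z c (Assign x c \<psi>)) (Assign z c (AS ps (K (insert z S \<union> F) a))))"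
    using lel_mp[OF 1 lel_ax[OF ax_AK]] 1[THEN LEL_wf] by auto
  have 4: "LEL (Imp (AS ps (K (insert z S \<union> F) a)) (AS qs (K (insert z S \<union> G) a)))"
    using Cons xF zF finF unfolding F_def G_def by (intro Cons.IH) auto
  have 5: "LEL (Imp (Assign z c (AS ps (K (insert z S \<union> F) a))) (Assign z c (AS qs (K (insert z S \<union> G) a))))"
    by (rule asg_mono[OF 4])
  have e1: "S \<union> set (map fst (p # ps)) = S \<union> insert x F" by (auto simp: p F_def)
  have e2: "S \<union> set (map fst (q # qs)) = insert z S \<union> G" by (auto simp: q G_def)
  show ?case unfolding e1 e2 using imp_trans[OF imp_trans[OF 2 3] 5] by (simp add: p q \<psi>_def)
qed

lemma move: "fst p \<notin> set (map fst L1) \<Longrightarrow> wf \<phi> \<Longrightarrow> LEL (Imp (AS (L1 @ p # L2) \<phi>) (AS (p # L1 @ L2) \<phi>))"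
proof (induction L1)
  case Nil then show ?case by (intro prop0) auto
next
  case (Cons q L1)
  obtain y d where p: "p = (y,d)" by force
  obtain z e where q: "q = (z,e)" by force
  have 1: "LEL (Imp (AS (L1 @ p # L2) \<phi>) (Assign y d (AS (L1 @ L2) \<phi>)))" using Cons p by auto
  have 2: "LEL (Imp (Assign z e (Assign y d (AS (L1 @ L2) \<phi>))) (Assign y d (Assign z e (AS (L1 @ L2) \<phi>))))"
    using Cons.prems p q by (intro lel_ax ax_comm) auto
  show ?case using imp_trans[OF asg_mono[OF 1] 2] p q by simp
qed

lemma perm: "distinct (map fst L) \<Longrightarrow> distinct (map fst M) \<Longrightarrow> set L = set M \<Longrightarrow> wf \<phi> \<Longrightarrow>
   LEL (Imp (AS L \<phi>) (AS M \<phi>))"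
proof (induction M arbitrary: L)
  case Nil then show ?case by (intro prop0) auto
next
  case (Cons p M)
  obtain y d where p: "p = (y,d)" by force
  have "p \<in> set L" using Cons by auto
  then obtain L1 L2 where L: "L = L1 @ p # L2" by (meson split_list)
  have n1: "fst p \<notin> set (map fst L1)" using Cons.prems(1) L by auto
  have 1: "LEL (Imp (AS L \<phi>) (AS (p # L1 @ L2) \<phi>))" using move[OF n1 Cons.prems(4)] L by simp
  have pM: "p \<notin> set M" using Cons.prems(2) by (force simp: p)
  have "p \<notin> set L1" "p \<notin> set L2" using Cons.prems(1) L by force+
  then have "set (L1 @ L2) = set M" using Cons.prems(3) L pM by auto
  then have 2: "LEL (Imp (AS (L1 @ L2) \<phi>) (AS M \<phi>))" using Cons.prems L by (intro Cons.IH) auto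
  show ?case using imp_trans[OF 1[unfolded p AS.simps] asg_mono[OF 2]] p by simp
qed


lemma AS_K: "LEL (AS ps (Imp A B)) \<Longrightarrow> LEL (Imp (AS ps A) (AS ps B))"
proof -
  assume h: "LEL (AS ps (Imp A B))"
  have "LEL (Imp (Imp A B) (Imp A B))" using LEL_wf[OF h] by (intro prop0) auto
  from AS_mono2[OF this] show ?thesis using h by (rule lel_mp[rotated])
qed

lemma AS_prop1: assumes "LEL (AS ps A)" "wf C" "\<And>v. peval v A \<Longrightarrow> peval v C" shows "LEL (AS ps C)"
proof -
  have "LEL (Imp A C)" using assms LEL_wf[OF assms(1)] by (intro prop0) auto
  from lel_mp[OF assms(1) AS_mono[OF this]] show ?thesis .
qed

lemma AS_prop2: assumes "LEL (AS ps A)" "LEL (AS ps B)" "wf C"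
  "\<And>v. peval v A \<Longrightarrow> peval v B \<Longrightarrow> peval v C" shows "LEL (AS ps C)"
proof -
  have "LEL (Imp A (Imp B C))" using assms LEL_wf[OF assms(1)] LEL_wf[OF assms(2)] by (intro prop0) auto
  from lel_mp[OF assms(2) lel_mp[OF assms(1) AS_mono2[OF this]]] show ?thesis .
qed

lemma ax5: assumes "wf b" "FV b = {}"
  shows "LEL (AS ps (Imp (Neg (K (set (map fst ps)) b)) (K (set (map fst ps)) (AS ps (Neg (K (set (map fst ps)) b))))))"
proof -
  have "LEL (Assigns (map fst ps) (map snd ps) (Imp (Neg (K (set (map fst ps)) b))
     (K (set (map fst ps)) (Assigns (map fst ps) (map snd ps) (Neg (K (set (map fst ps)) b))))))"
    using assms by (intro lel_ax ax_5) (auto simp: Assigns_AS)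
  then show ?thesis by (simp add: Assigns_AS zip_map_fst_snd)
qed

lemma four: assumes wa: "wf a" and fa: "FV a = {}"
  shows "LEL (Imp (AS ps (K (set (map fst ps)) a))
                  (AS ps (K (set (map fst ps)) (AS ps (K (set (map fst ps)) a)))))"
proof -
  define X where "X = set (map fst ps)"
  define \<kappa> where "\<kappa> = K X a"
  define s where "s = AS ps (Neg \<kappa>)"
  define \<beta> where "\<beta> = AS ps \<kappa>"
  define q where "q = AS ps (Neg (K X s))"
  have fin: "finite X" by (simp add: X_def)
  have ws: "wf s" "FV s = {}" "wf \<beta>" "FV \<beta> = {}" "wf q" "FV q = {}" "wf \<kappa>"
    using wa fa by (auto simp: s_def \<kappa>_def \<beta>_def q_def X_def)
  have a5: "LEL (AS ps (Imp (Neg \<kappa>) (K X s)))"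
    using ax5[OF wa fa, of ps] by (simp add: s_def \<kappa>_def X_def)
  have b5: "LEL (AS ps (Imp (Neg (K X s)) (K X q)))"
    using ax5[OF ws(1,2), of ps] by (simp add: q_def X_def)
  have T1: "LEL (AS ps (Imp (Neg (K X s)) \<kappa>))"
    by (rule AS_prop1[OF a5]) (use ws fin in auto)
  have i0: "LEL (Imp q \<beta>)" using AS_K[OF T1] by (simp add: q_def \<beta>_def)
  have i1: "LEL (Imp (K X q) (K X \<beta>))" by (rule K_mono[OF i0 ws(6) ws(4) fin])
  have i: "LEL (AS ps (Imp (K X q) (K X \<beta>)))" by (rule AS_nec[OF i1])
  have iii1: "LEL (Imp s (AS ps (Imp \<kappa> (Neg s))))"
  proof -
    have "LEL (Imp (Neg \<kappa>) (Imp \<kappa> (Neg s)))" using ws by (intro prop0) auto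
    from AS_mono[OF this, of ps] show ?thesis by (simp add: s_def)
  qed
  have iii2: "LEL (Imp (Neg s) (AS ps (Imp \<kappa> (Neg s))))"
  proof -
    have 1: "LEL (Imp (Neg s) (AS ps (Neg s)))" using ws by (intro AS_vac) auto
    have "LEL (Imp (Neg s) (Imp \<kappa> (Neg s)))" using ws by (intro prop0) auto
    from imp_trans[OF 1 AS_mono[OF this]] show ?thesis .
  qed
  have iii: "LEL (AS ps (Imp \<kappa> (Neg s)))"
    by (rule prop2[OF iii1 iii2]) (use ws in auto)
  have T: "LEL (AS ps (Imp (K X s) s))" using ws fin by (intro AS_nec lel_ax ax_T) auto
  have c1: "LEL (AS ps (Imp \<kappa> (Neg (K X s))))"
    by (rule AS_prop2[OF iii T]) (use ws fin in auto)
  have c2: "LEL (AS ps (Imp \<kappa> (K X q)))"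
    by (rule AS_prop2[OF c1 b5]) (use ws fin in auto)
  have c3: "LEL (AS ps (Imp \<kappa> (K X \<beta>)))"
    by (rule AS_prop2[OF c2 i]) (use ws fin in auto)
  show ?thesis using AS_K[OF c3] by (simp add: \<beta>_def \<kappa>_def X_def)
qed

lemma knowL: "distinct (map fst ps) \<Longrightarrow> (y,c) \<in> set ps \<Longrightarrow> y \<in> X \<Longrightarrow> finite X \<Longrightarrow> wf \<theta> \<Longrightarrow> FV \<theta> = {} \<Longrightarrow>
  LEL (Imp (Assign y c (K {y} \<theta>)) (AS ps (K X \<theta>)))"
proof (induction ps)
  case Nil then show ?case by simp
next
  case (Cons p ps)
  obtain z d where p: "p = (z,d)" by force
  show ?case
  proof (cases "p = (y,c)")
    case True
    have yn: "y \<notin> set (map fst ps)" using Cons.prems True by auto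
    have 1: "LEL (Imp (K {y} \<theta>) (AS ps (K {y} \<theta>)))" using Cons.prems yn by (intro AS_vac) auto
    have 2: "LEL (Imp (AS ps (K {y} \<theta>)) (AS ps (K X \<theta>)))"
      using Cons.prems by (intro AS_mono Kidx_mono) auto
    show ?thesis using asg_mono[OF imp_trans[OF 1 2], of y c] True by simp
  next
    case False
    have IH: "LEL (Imp (Assign y c (K {y} \<theta>)) (AS ps (K X \<theta>)))" using Cons False by auto
    have 1: "LEL (Imp (Assign y c (K {y} \<theta>)) (Assign z d (Assign y c (K {y} \<theta>))))"
      using Cons.prems by (intro vac) auto
    show ?thesis using imp_trans[OF 1 asg_mono[OF IH]] p by simp
  qed
qed

lemma fresh_inj: assumes "infinite (UNIV::'x set)" "finite (F::'x set)"
  shows "\<exists>g::'a::finite \<Rightarrow> 'x. inj g \<and> range g \<inter> F = {}"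
proof -
  have "infinite (UNIV - F)" using assms by (simp add: Diff_infinite_finite)
  then obtain f :: "nat \<Rightarrow> 'x" where f: "inj f" "range f \<subseteq> UNIV - F"
    using infinite_countable_subset by blast
  obtain h :: "'a \<Rightarrow> nat" and n where h: "inj_on h UNIV"
    using finite_imp_inj_to_nat_seg[OF finite_UNIV[where 'a='a]] by blast
  have "inj (f \<circ> h)" using f h by (simp add: inj_compose)
  moreover have "range (f \<circ> h) \<inter> F = {}" using f by auto
  ultimately show ?thesis by blast
qed

lemma gmono:
  fixes ps qs :: "('x \<times> 'a::finite) list" and a :: "('p, 'x, 'a) fm"
  assumes inf: "infinite (UNIV::'x set)"
    and d: "distinct (map fst ps)" "distinct (map fst qs)" "distinct (map snd ps)" "distinct (map snd qs)"
    and sub: "set (map snd ps) \<subseteq> set (map snd qs)" and wa: "wf a" "FV a = {}"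
  shows "LEL (Imp (AS ps (K (set (map fst ps)) a)) (AS qs (K (set (map fst qs)) a)))"
proof -
  obtain g :: "'a \<Rightarrow> 'x" where g: "inj g" "range g \<inter> (set (map fst ps) \<union> set (map fst qs)) = {}"
    using fresh_inj[OF inf, of "set (map fst ps) \<union> set (map fst qs)"] by auto
  define ps' where "ps' = map (\<lambda>p. (g (snd p), snd p)) ps"
  define rs where "rs = map (\<lambda>c. (g c, c)) (map snd qs)"
  define extra where "extra = filter (\<lambda>p. p \<notin> set ps') rs"
  have fps': "map fst ps' = map g (map snd ps)" by (simp add: ps'_def)
  have frs: "map fst rs = map g (map snd qs)" by (simp add: rs_def)
  have dps': "distinct (map fst ps')" unfolding fps' using d g by (simp add: distinct_map inj_on_def inj_def)
  have drs: "distinct (map fst rs)" unfolding frs using d g by (simp add: distinct_map inj_on_def inj_def)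
  have sps: "set ps' \<subseteq> set rs"
  proof
    fix p assume "p \<in> set ps'"
    then obtain c where "p = (g c, c)" "c \<in> set (map snd ps)" by (auto simp: ps'_def)
    then have "c \<in> set (map snd qs)" using sub by auto
    then show "p \<in> set rs" using \<open>p = (g c, c)\<close> unfolding rs_def by (simp only: set_map) blast
  qed
  have R1: "LEL (Imp (AS ps (K (set (map fst ps)) a)) (AS ps' (K (set (map fst ps')) a)))"
  proof -
    have disj1: "set (map fst ps) \<inter> set (map fst ps') = {}" using g by (auto simp: fps')
    have "length ps = length ps'" "map snd ps = map snd ps'" by (auto simp: ps'_def)
    from rename[OF this d(1) dps' disj1 _ _ wa, of "{}"] show ?thesis by simp
  qed
  have R2a: "LEL (Imp (AS ps' (K (set (map fst ps')) a)) (AS extra (AS ps' (K (set (map fst ps')) a))))"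
    using wa by (intro AS_vac) auto
  have R2b: "LEL (Imp (AS (extra @ ps') (K (set (map fst ps')) a)) (AS (extra @ ps') (K (set (map fst rs)) a)))"
    using wa sps by (intro AS_mono Kidx_mono) auto
  have dex: "distinct (map fst (extra @ ps'))"
  proof -
    have "distinct (map fst extra)" using drs by (simp add: extra_def distinct_map_filter)
    moreover have "set (map fst extra) \<inter> set (map fst ps') = {}"
      using g(1) by (auto simp: extra_def rs_def ps'_def inj_def) (metis (mono_tags, lifting) image_eqI snd_conv)
    ultimately show ?thesis using dps' by simp
  qed
  have R3: "LEL (Imp (AS (extra @ ps') (K (set (map fst rs)) a)) (AS rs (K (set (map fst rs)) a)))"
    using dex drs sps wa by (intro perm) (auto simp: extra_def)
  have R4: "LEL (Imp (AS rs (K (set (map fst rs)) a)) (AS qs (K (set (map fst qs)) a)))"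
  proof -
    have disj1: "set (map fst rs) \<inter> set (map fst qs) = {}" using g by (auto simp: frs)
    have "length rs = length qs" "map snd rs = map snd qs" by (auto simp: rs_def)
    from rename[OF this drs d(2) disj1 _ _ wa, of "{}"] show ?thesis by simp
  qed
  note R2b = R2b[unfolded AS_append]
  note R3 = R3[unfolded AS_append]
  show ?thesis using imp_trans[OF imp_trans[OF imp_trans[OF R1 R2a] R2b] imp_trans[OF R3 R4]] .
qed


lemma know_c: assumes wf: "wf f" and fv: "FV f \<subseteq> {x}"
  and H: "LEL (Assign x c (Imp f (K {x} (Assign x c f))))"
  shows "LEL (Imp (Assign x c f) (Assign y c (K {y} (Dia x c f))))"
proof -
  define \<theta> where "\<theta> = Dia x c f"
  have s0: "FV (Assign x c f) = {}" "FV \<theta> = {}" "FV (Dia x c Top) = {}" "wf \<theta>"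
    using fv wf by (auto simp: \<theta>_def)
  have c1: "LEL (Imp (Assign x c f) (Assign x c (K {x} (Assign x c f))))"
    by (rule lel_mp[OF H], intro lel_ax ax_AK) (use wf fv in auto)
  have d: "LEL (Assign x c (K {x} (Dia x c Top)))" by (intro lel_ax ax_exist) auto
  have e0: "LEL (Imp (Assign x c f) (Imp (Assign x c (Neg f)) (Assign x c (Neg Top))))"
    using wf by (intro asg_mono2 prop0) auto
  have e: "LEL (Imp (Assign x c f) (Imp (Dia x c Top) \<theta>))"
    by (rule prop1[OF e0]) (use wf in \<open>auto simp: \<theta>_def\<close>)
  have f1: "LEL (Imp (Assign x c (K {x} (Assign x c f))) (Imp (Assign x c (K {x} (Dia x c Top))) (Assign x c (K {x} \<theta>))))"
    using s0 by (intro asg_mono2 K_mono2[OF e]) auto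
  have f: "LEL (Imp (Assign x c f) (Assign x c (K {x} \<theta>)))"
    by (rule prop3[OF c1 d f1]) (use wf s0 in auto)
  have g0: "LEL (Assign y c (Imp (Assign x c (K {x} \<theta>)) (subst y x (K {x} \<theta>))))"
    using s0 by (intro lel_ax ax_subst) auto
  have g1: "LEL (Imp (Assign y c (Assign x c (K {x} \<theta>))) (Assign y c (K {y} \<theta>)))"
    by (rule lel_mp[OF g0[simplified]], intro lel_ax ax_AK) (use s0 in auto)
  have g2: "LEL (Imp (Assign x c (K {x} \<theta>)) (Assign y c (Assign x c (K {x} \<theta>))))"
    using s0 by (intro vac) auto
  show ?thesis using imp_trans[OF f imp_trans[OF g2 g1]] by (simp add: \<theta>_def)
qed

lemma K_conj: assumes "\<And>g. g \<in> set gs \<Longrightarrow> LEL (Imp h (AS P (K X g)))"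
  "\<And>g. g \<in> set gs \<Longrightarrow> wf g \<and> FV g = {}" "finite X" "wf h"
  shows "LEL (Imp h (AS P (K X (Conj gs))))"
  using assms
proof (induction gs)
  case Nil
  have "LEL (Top :: ('a,'b,'c::finite) fm)" by (intro prop0) auto
  then have "LEL (K {} (Top :: ('a,'b,'c::finite) fm))" by (intro lel_nec) auto
  then have "LEL (K X (Top :: ('a,'b,'c::finite) fm))"
    by (rule lel_mp[OF _ Kidx_mono]) (use Nil in auto)
  then have "LEL (AS P (K X (Top :: ('a,'b,'c::finite) fm)))" by (rule AS_nec)
  then show ?case by (rule prop1) (use Nil in auto)
next
  case (Cons g gs)
  have 1: "LEL (Imp h (AS P (K X g)))" "LEL (Imp h (AS P (K X (Conj gs))))" using Cons by auto
  have "LEL (Imp g (Imp (Conj gs) (Conj (g # gs))))" using Cons.prems by (intro prop0) auto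
  then have "LEL (Imp (K X g) (Imp (K X (Conj gs)) (K X (Conj (g # gs)))))"
    using Cons.prems by (intro K_mono2) auto
  then have 2: "LEL (Imp (AS P (K X g)) (Imp (AS P (K X (Conj gs))) (AS P (K X (Conj (g # gs))))))"
    by (rule AS_mono2)
  show ?case by (rule prop3[OF 1 2]) (use Cons.prems LEL_wf[OF 2] in auto)
qed


lemma conj_elim: "g \<in> set gs \<Longrightarrow> wf (Conj gs) \<Longrightarrow> LEL (Imp (Conj gs) g)"
  by (intro prop0) auto

lemma vcD: assumes "valid_choice Bs enum vars"
  shows "distinct (enum B)" "set (enum B) = B" "distinct (vars B)" "length (vars B) = length (enum B)"
    "set Bs = Pow UNIV"
  using assms by (auto simp: valid_choice_def)

lemma PB: "length xs = length as \<Longrightarrow> Assigns xs as (K (set xs) a) =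
   AS (zip xs as) (K (set (map fst (zip xs as))) a)"
  by (simp add: Assigns_AS)

lemma wf_bang[simp]: "wf f \<Longrightarrow> wf (bang enum x f B)" by (auto simp: bang_def)
lemma wf_Assigns[simp]: "wf (Assigns xs as g) = wf g" by (simp add: Assigns_AS)
lemma FV_bang: "FV f \<subseteq> {x} \<Longrightarrow> FV (bang enum x f B) = {}" by (auto simp: bang_def)

lemma wf_Kphi: "wf f \<Longrightarrow> wf a \<Longrightarrow> FV a = {} \<Longrightarrow> wf (Kphi Bs enum vars x f a)"
  by (auto simp: Kphi_def)

lemma FV_Kphi: "valid_choice Bs enum vars \<Longrightarrow> FV f \<subseteq> {x} \<Longrightarrow> FV (Kphi Bs enum vars x f a) = {}"
  by (auto simp: Kphi_def FV_bang PB vcD)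

lemma mainB:
  fixes f :: "('p, 'x, 'a::finite) fm"
  assumes inf: "infinite (UNIV :: 'x set)"
    and wff: "wf f" and fvf: "FV f \<subseteq> {x}"
    and H: "\<forall>c. LEL (Assign x c (Imp f (K {x} (Assign x c f))))"
    and vc: "valid_choice Bs enum vars"
    and wa: "wf a" "FV a = {}" and BB: "B \<in> set Bs"
  shows "LEL (Imp (Kphi Bs enum vars x f a) (Imp (bang enum x f B)
           (Assigns (vars B) (enum B) (K (set (vars B)) (Kphi Bs enum vars x f a)))))"
proof -
  define \<kappa> where "\<kappa> = Kphi Bs enum vars x f a"
  define P where "P = zip (vars B) (enum B)"
  define X where "X = set (vars B)"
  define \<beta> where "\<beta> = AS P (K X a)"
  define D where "D = Conj (map (\<lambda>c. Dia x c f) (enum B))"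
  note vB = vcD(1-4)[OF vc, of B]
  have mfP: "map fst P = vars B" "map snd P = enum B" using vB by (auto simp: P_def)
  have finX: "finite X" by (simp add: X_def)
  have w\<kappa>: "wf \<kappa>" "FV \<kappa> = {}" using wff wa vc fvf by (auto simp: \<kappa>_def wf_Kphi FV_Kphi)
  have w\<beta>: "wf \<beta>" "FV \<beta> = {}" using wa by (auto simp: \<beta>_def X_def mfP(1)[symmetric])
  have wD: "wf D" "FV D = {}" using wff fvf by (auto simp: D_def)
  have wbang: "wf (bang enum x f B)" "FV (bang enum x f B) = {}" using wff fvf by (auto simp: FV_bang)
  have m1: "LEL (Imp \<kappa> (Imp (bang enum x f B) \<beta>))"
  proof -
    have "Imp (bang enum x f B) \<beta> \<in> set (map (\<lambda>B. Imp (bang enum x f B) (Assigns (vars B) (enum B) (K (set (vars B)) a))) Bs)"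
    proof -
      have "Assigns (vars B) (enum B) (K (set (vars B)) a) = \<beta>"
        by (simp add: \<beta>_def P_def X_def Assigns_AS)
      then show ?thesis using BB by force
    qed
    from conj_elim[OF this] show ?thesis using w\<kappa> by (simp add: \<kappa>_def Kphi_def)
  qed
  have C1: "LEL (Imp \<beta> (AS P (K X \<beta>)))"
    using four[OF wa, of P] by (simp add: \<beta>_def X_def mfP)
  have C2: "LEL (Imp (bang enum x f B) (AS P (K X D)))"
    unfolding D_def
  proof (rule K_conj)
    fix g assume "g \<in> set (map (\<lambda>c. Dia x c f) (enum B))"
    then obtain c where c: "c \<in> set (enum B)" and g: "g = Dia x c f" by auto
    then obtain i where i: "i < length (enum B)" "enum B ! i = c" by (meson in_set_conv_nth)
    define y where "y = vars B ! i"
    have yP: "(y, c) \<in> set P" using i vB by (auto simp: P_def y_def set_zip)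
    have yX: "y \<in> X" using i vB by (auto simp: X_def y_def)
    have e1: "LEL (Imp (bang enum x f B) (Dia x c f))"
      using c wff by (intro prop0) (auto simp: bang_def)
    have e2: "LEL (Imp (Dia x c f) (Assign x c f))" using wff by (intro lel_ax ax_func) auto
    have e3: "LEL (Imp (Assign x c f) (Assign y c (K {y} (Dia x c f))))"
      using H wff fvf by (intro know_c) auto
    have e4: "LEL (Imp (Assign y c (K {y} (Dia x c f))) (AS P (K X (Dia x c f))))"
      using yP yX finX wff fvf vB by (intro knowL) (auto simp: mfP)
    show "LEL (Imp (bang enum x f B) (AS P (K X g)))"
      unfolding g using imp_trans[OF imp_trans[OF e1 e2] imp_trans[OF e3 e4]] .
  next
    fix g assume "g \<in> set (map (\<lambda>c. Dia x c f) (enum B))"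
    then show "wf g \<and> FV g = {}" using wff fvf by auto
  qed (use finX wff in auto)
  have C3: "LEL (Imp \<beta> (Imp D \<kappa>))"
  proof -
    have "LEL (Imp (And \<beta> D) \<kappa>)"
      unfolding \<kappa>_def Kphi_def
    proof (rule conj_intro)
      fix g assume "g \<in> set (map (\<lambda>B. Imp (bang enum x f B) (Assigns (vars B) (enum B) (K (set (vars B)) a))) Bs)"
      then obtain B' where B': "B' \<in> set Bs" and g: "g = Imp (bang enum x f B') (Assigns (vars B') (enum B') (K (set (vars B')) a))"
        by auto
      note vB' = vcD(1-4)[OF vc, of B']
      define P' where "P' = zip (vars B') (enum B')"
      have mfP': "map fst P' = vars B'" "map snd P' = enum B'" using vB' by (auto simp: P'_def)
      have g': "g = Imp (bang enum x f B') (AS P' (K (set (map fst P')) a))"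
      proof -
        have sP': "set (map fst P') = set (vars B')" using mfP' by simp
        show ?thesis unfolding sP' using g by (simp add: P'_def Assigns_AS)
      qed
      show "LEL (Imp (And \<beta> D) g)"
      proof (cases "B \<subseteq> B'")
        case True
        have "LEL (Imp \<beta> (AS P' (K (set (map fst P')) a)))"
          unfolding \<beta>_def X_def mfP(1)[symmetric]
          by (rule gmono[OF inf]) (use vB vB' True wa in \<open>auto simp: mfP mfP'\<close>)
        then show ?thesis unfolding g' by (rule prop1) (use wD wff wa w\<beta> in auto)
      next
        case False
        then obtain c where c: "c \<in> B" "c \<notin> B'" by auto
        have m1: "c \<in> set (enum B)" using c vB by auto
        have m2: "c \<in> set (enum (UNIV - B'))" using c vcD(1-4)[OF vc, of "UNIV - B'"] by auto
        show ?thesis unfolding g' D_def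
          using m1 m2 w\<beta> wD wa wff by (intro prop0) (auto simp: bang_def)
      qed
    qed (use w\<beta> wD in auto)
    then show ?thesis by (rule prop1) (use w\<beta> wD w\<kappa> in auto)
  qed
  have M0: "LEL (Imp (K X \<beta>) (Imp (K X D) (K X \<kappa>)))"
    by (rule K_mono2[OF C3 w\<beta>(2) wD(2) w\<kappa>(2) finX])
  have M: "LEL (Imp (AS P (K X \<beta>)) (Imp (AS P (K X D)) (AS P (K X \<kappa>))))"
    by (rule AS_mono2[OF M0])
  have N: "LEL (Imp \<beta> (Imp (AS P (K X D)) (AS P (K X \<kappa>))))"
    by (rule prop2[OF C1 M]) (use LEL_wf[OF M] w\<beta> in auto)
  have F: "LEL (Imp \<kappa> (Imp (bang enum x f B) (AS P (K X \<kappa>))))"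
    by (rule prop3[OF m1 C2 N]) (use LEL_wf[OF M] w\<kappa> wbang in auto)
  show ?thesis using F by (simp add: P_def X_def \<kappa>_def Assigns_AS)
qed

theorem lemma1:
  fixes f :: "('p::countable, 'x::countable, 'a::finite) fm" and x :: 'x
    and Bs :: "'a set list" and enum :: "'a set \<Rightarrow> 'a list" and vars :: "'a set \<Rightarrow> 'x list"
  assumes "infinite (UNIV :: 'x set)"
    and "wf f" and "FV f \<subseteq> {x}"
    and "\<forall>c. LEL (Assign x c (Imp f (K {x} (Assign x c f))))"
    and "valid_choice Bs enum vars"
  shows "\<forall>a. wf a \<and> FV a = {} \<longrightarrow>
           LEL (Imp (Kphi Bs enum vars x f a) (Kphi Bs enum vars x f (Kphi Bs enum vars x f a)))"
proof (intro allI impI)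
  fix a :: "('p, 'x, 'a) fm" assume wa: "wf a \<and> FV a = {}"
  show "LEL (Imp (Kphi Bs enum vars x f a) (Kphi Bs enum vars x f (Kphi Bs enum vars x f a)))"
    unfolding Kphi_def[of Bs enum vars x f "Kphi Bs enum vars x f a"]
  proof (rule conj_intro)
    fix g assume "g \<in> set (map (\<lambda>B. Imp (bang enum x f B) (Assigns (vars B) (enum B)
         (K (set (vars B)) (Kphi Bs enum vars x f a)))) Bs)"
    then obtain B where "B \<in> set Bs" and g: "g = Imp (bang enum x f B) (Assigns (vars B) (enum B)
         (K (set (vars B)) (Kphi Bs enum vars x f a)))" by auto
    then show "LEL (Imp (Kphi Bs enum vars x f a) g)" using mainB[OF assms] wa by simp
  qed (use assms wa in \<open>simp add: wf_Kphi\<close>)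
qed

end
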